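(* Let $R$ be a ring and $I$ a nil ideal of $R$. (i) $R$ is GWNC if, and only if, $R/I$ is GWNC. (ii) $R$ is GWNC if, and only if, $J(R)$ is nil and $R/J(R)$ is GWNC.
   Context: All rings are associative with identity; $J(R)$ is the Jacobson radical. For a ring $S$, $U(S)$, ${\rm Nil}(S)$, ${\rm Id}(S)$ denote units, nilpotents, idempotents. $S$ is GWNC if every $a\in S\setminus U(S)$ can be written as $a=q+e$ or $a=q-e$ with $q\in{\rm Nil}(S)$, $e\in{\rm Id}(S)$. *)

theory Defs
  imports "HOL-Algebra.Algebra"
begin

definition nilpotents :: "('a, 'b) ring_scheme \<Rightarrow> 'a set" where
  "nilpotents R = {x \<in> carrier R. \<exists>n::nat. x [^]\<^bsub>R\<^esub> n = \<zero>\<^bsub>R\<^esub>}"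

definition idempotents :: "('a, 'b) ring_scheme \<Rightarrow> 'a set" where
  "idempotents R = {e \<in> carrier R. e \<otimes>\<^bsub>R\<^esub> e = e}"

definition GWNC :: "('a, 'b) ring_scheme \<Rightarrow> bool" where
  "GWNC R \<longleftrightarrow> (\<forall>a \<in> carrier R - Units R. \<exists>q \<in> nilpotents R. \<exists>e \<in> idempotents R.
       a = q \<oplus>\<^bsub>R\<^esub> e \<or> a = q \<ominus>\<^bsub>R\<^esub> e)"

definition nil_ideal :: "'a set \<Rightarrow> ('a, 'b) ring_scheme \<Rightarrow> bool" where
  "nil_ideal I R \<longleftrightarrow> ideal I R \<and> I \<subseteq> nilpotents R"

definition left_ideal :: "'a set \<Rightarrow> ('a, 'b) ring_scheme \<Rightarrow> bool" where
  "left_ideal L R \<longleftrightarrow> additive_subgroup L R \<and>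
     (\<forall>r \<in> carrier R. \<forall>x \<in> L. r \<otimes>\<^bsub>R\<^esub> x \<in> L)"

definition maximal_left_ideal :: "'a set \<Rightarrow> ('a, 'b) ring_scheme \<Rightarrow> bool" where
  "maximal_left_ideal M R \<longleftrightarrow> left_ideal M R \<and> M \<noteq> carrier R \<and>
     (\<forall>L. left_ideal L R \<and> M \<subseteq> L \<longrightarrow> L = M \<or> L = carrier R)"

(* Jacobson radical: intersection of all maximal left ideals (carrier R if there are none) *)
definition jacobson :: "('a, 'b) ring_scheme \<Rightarrow> 'a set" where
  "jacobson R = carrier R \<inter> \<Inter> {M. maximal_left_ideal M R}"

end

theory Submission
  imports Defs
begin


context ring
begin

lemma pow_zero_mono:
  assumes "x \<in> carrier R" "x [^] (n::nat) = \<zero>" "n \<le> m"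
  shows "x [^] m = \<zero>"
proof -
  obtain k where "m = n + k" using assms(3) le_Suc_ex by blast
  then have "x [^] m = x [^] n \<otimes> x [^] k" using assms(1) by (simp add: nat_pow_mult)
  then show ?thesis using assms by simp
qed

lemma neg_pow_cases:
  assumes "x \<in> carrier R"
  shows "(\<ominus> x) [^] (n::nat) = x [^] n \<or> (\<ominus> x) [^] n = \<ominus> (x [^] n)"
proof (induction n)
  case 0 then show ?case by simp
next
  case (Suc n)
  then show ?case
  proof
    assume h: "(\<ominus> x) [^] n = x [^] n"
    have "(\<ominus> x) [^] Suc n = x [^] n \<otimes> \<ominus> x" using h by simp
    also have "\<dots> = \<ominus> (x [^] Suc n)" using assms by (simp add: r_minus)
    finally show ?thesis by blast
  next
    assume h: "(\<ominus> x) [^] n = \<ominus> (x [^] n)"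
    have "(\<ominus> x) [^] Suc n = \<ominus> (x [^] n) \<otimes> \<ominus> x" using h by simp
    also have "\<dots> = x [^] Suc n" using assms by (simp add: r_minus l_minus)
    finally show ?thesis by blast
  qed
qed

lemma neg_nilpotent:
  assumes "x \<in> nilpotents R" shows "\<ominus> x \<in> nilpotents R"
proof -
  from assms obtain n :: nat where x: "x \<in> carrier R" "x [^] n = \<zero>" unfolding nilpotents_def by blast
  have "(\<ominus> x) [^] n = \<zero>" using neg_pow_cases[OF x(1), of n] x by auto
  then show ?thesis using x unfolding nilpotents_def by auto
qed

lemma lr_inv_eq:
  assumes "a \<in> carrier R" "l \<in> carrier R" "r \<in> carrier R" "l \<otimes> a = \<one>" "a \<otimes> r = \<one>"
  shows "l = r"
proof -
  have "l = l \<otimes> (a \<otimes> r)" using assms by simp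
  also have "\<dots> = (l \<otimes> a) \<otimes> r" using assms(1-3) by (simp add: m_assoc)
  also have "\<dots> = r" using assms by simp
  finally show "l = r" .
qed

lemma left_right_inv_unit:
  assumes "a \<in> carrier R" "l \<in> carrier R" "r \<in> carrier R" "l \<otimes> a = \<one>" "a \<otimes> r = \<one>"
  shows "a \<in> Units R"
proof -
  have "l = r" by (rule lr_inv_eq[OF assms])
  then show ?thesis using assms unfolding Units_def by auto
qed

lemma one_minus_step:
  assumes "x \<in> carrier R" "y \<in> carrier R"
  shows "(\<one> \<ominus> x) \<oplus> x \<otimes> (\<one> \<ominus> y) = \<one> \<ominus> x \<otimes> y"
proof -
  have "x \<otimes> (\<one> \<ominus> y) = x \<ominus> x \<otimes> y" using assms by (simp add: minus_eq r_distr r_minus)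
  then show ?thesis using assms by (simp add: minus_eq a_assoc r_neg1)
qed

lemma minus_plus_cancel:
  assumes "x \<in> carrier R" "y \<in> carrier R"
  shows "(x \<ominus> y) \<oplus> y = x"
  using assms by (simp add: minus_eq a_assoc l_neg)

lemma one_minus_one_minus:
  assumes "c \<in> carrier R"
  shows "\<one> \<ominus> (\<one> \<ominus> c) = c"
  using assms by (simp add: minus_eq minus_add a_assoc[symmetric] r_neg)

lemma one_minus_nil_unit:
  assumes "x \<in> nilpotents R" shows "\<one> \<ominus> x \<in> Units R"
proof -
  from assms obtain N :: nat where x: "x \<in> carrier R" "x [^] N = \<zero>" unfolding nilpotents_def by blast
  have comm: "(\<one> \<ominus> x) \<otimes> x = x \<otimes> (\<one> \<ominus> x)" using x
    by (simp add: minus_eq l_distr r_distr l_minus r_minus)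
  have "\<exists>s\<in>carrier R. (\<one> \<ominus> x) \<otimes> s = \<one> \<ominus> x [^] n \<and> s \<otimes> (\<one> \<ominus> x) = \<one> \<ominus> x [^] n" for n :: nat
  proof (induction n)
    case 0 then show ?case by (intro bexI[of _ \<zero>]) (auto simp: x a_minus_def r_neg)
  next
    case (Suc n)
    then obtain s where s: "s \<in> carrier R" "(\<one> \<ominus> x) \<otimes> s = \<one> \<ominus> x [^] n" "s \<otimes> (\<one> \<ominus> x) = \<one> \<ominus> x [^] n" by blast
    have xn: "x [^] n \<in> carrier R" using x by simp
    have "(\<one> \<ominus> x) \<otimes> (\<one> \<oplus> x \<otimes> s) = (\<one> \<ominus> x) \<oplus> (\<one> \<ominus> x) \<otimes> (x \<otimes> s)"
      using x s by (simp add: r_distr)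
    also have "(\<one> \<ominus> x) \<otimes> (x \<otimes> s) = ((\<one> \<ominus> x) \<otimes> x) \<otimes> s" using x s by (simp add: m_assoc)
    also have "\<dots> = (x \<otimes> (\<one> \<ominus> x)) \<otimes> s" using comm by simp
    also have "\<dots> = x \<otimes> ((\<one> \<ominus> x) \<otimes> s)" using x s by (simp add: m_assoc)
    also have "\<dots> = x \<otimes> (\<one> \<ominus> x [^] n)" using s by simp
    also have "(\<one> \<ominus> x) \<oplus> x \<otimes> (\<one> \<ominus> x [^] n) = \<one> \<ominus> x \<otimes> x [^] n" by (rule one_minus_step[OF x(1) xn])
    also have "x \<otimes> x [^] n = x [^] Suc n" by (rule nat_pow_Suc2[OF x(1), symmetric])
    finally have 1: "(\<one> \<ominus> x) \<otimes> (\<one> \<oplus> x \<otimes> s) = \<one> \<ominus> x [^] Suc n" .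
    have "(\<one> \<oplus> x \<otimes> s) \<otimes> (\<one> \<ominus> x) = (\<one> \<ominus> x) \<oplus> (x \<otimes> s) \<otimes> (\<one> \<ominus> x)"
      using x s by (simp add: l_distr)
    also have "(x \<otimes> s) \<otimes> (\<one> \<ominus> x) = x \<otimes> (s \<otimes> (\<one> \<ominus> x))" using x s by (simp add: m_assoc)
    also have "\<dots> = x \<otimes> (\<one> \<ominus> x [^] n)" using s by simp
    also have "(\<one> \<ominus> x) \<oplus> x \<otimes> (\<one> \<ominus> x [^] n) = \<one> \<ominus> x \<otimes> x [^] n" by (rule one_minus_step[OF x(1) xn])
    also have "x \<otimes> x [^] n = x [^] Suc n" by (rule nat_pow_Suc2[OF x(1), symmetric])
    finally have 2: "(\<one> \<oplus> x \<otimes> s) \<otimes> (\<one> \<ominus> x) = \<one> \<ominus> x [^] Suc n" .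
    show ?case using 1 2 x s by (intro bexI[of _ "\<one> \<oplus> x \<otimes> s"]) auto
  qed
  then obtain s where "s \<in> carrier R" "(\<one> \<ominus> x) \<otimes> s = \<one>" "s \<otimes> (\<one> \<ominus> x) = \<one>"
    using x by (metis a_minus_def add.r_one minus_zero one_closed)
  then show ?thesis using x unfolding Units_def by auto
qed

end


context ring
begin

lemma left_idealI:
  assumes sub: "L \<subseteq> carrier R" and z: "\<zero> \<in> L"
    and add: "\<And>x y. x \<in> L \<Longrightarrow> y \<in> L \<Longrightarrow> x \<oplus> y \<in> L"
    and lm: "\<And>r x. r \<in> carrier R \<Longrightarrow> x \<in> L \<Longrightarrow> r \<otimes> x \<in> L"
  shows "left_ideal L R"
proof -
  have inv: "\<ominus> x \<in> L" if "x \<in> L" for x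
  proof -
    have xc: "x \<in> carrier R" using that sub by auto
    have "\<ominus> x = (\<ominus> \<one>) \<otimes> x" using xc by (simp add: l_minus)
    then show ?thesis using lm[OF _ that, of "\<ominus> \<one>"] by simp
  qed
  have "subgroup L (add_monoid R)"
    apply (rule add.subgroupI)
    using sub z inv add by (auto simp: a_inv_def)
  then show ?thesis unfolding left_ideal_def using lm by (auto intro: additive_subgroupI)
qed

lemma left_idealD:
  assumes "left_ideal L R"
  shows "L \<subseteq> carrier R" "\<zero> \<in> L" "\<And>x y. x \<in> L \<Longrightarrow> y \<in> L \<Longrightarrow> x \<oplus> y \<in> L"
    "\<And>x. x \<in> L \<Longrightarrow> \<ominus> x \<in> L"
    "\<And>r x. r \<in> carrier R \<Longrightarrow> x \<in> L \<Longrightarrow> r \<otimes> x \<in> L"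
  using assms unfolding left_ideal_def
  by (auto simp: additive_subgroup.a_subset additive_subgroup.zero_closed
      additive_subgroup.a_closed additive_subgroup.a_inv_closed)

lemma left_ideal_one:
  assumes "left_ideal L R" "\<one> \<in> L"
  shows "L = carrier R"
proof
  show "L \<subseteq> carrier R" using left_idealD(1)[OF assms(1)] .
  show "carrier R \<subseteq> L"
  proof
    fix r assume r: "r \<in> carrier R"
    have "r \<otimes> \<one> \<in> L" using left_idealD(5)[OF assms(1) r assms(2)] .
    then show "r \<in> L" using r by simp
  qed
qed

lemma exists_max_left_ideal:
  assumes L: "left_ideal L R" and one: "\<one> \<notin> L"
  shows "\<exists>M. maximal_left_ideal M R \<and> L \<subseteq> M"
proof -
  let ?A = "{L'. left_ideal L' R \<and> L \<subseteq> L' \<and> \<one> \<notin> L'}"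
  have "\<exists>M\<in>(?A). \<forall>X1\<in>(?A). M \<subseteq> X1 \<longrightarrow> X1 = M"
  proof (rule subset_Zorn_nonempty)
    show "?A \<noteq> {}" using assms by auto
  next
    fix C assume C: "C \<noteq> {}" "subset.chain ?A C"
    have CA: "C \<subseteq> ?A" and ch: "\<forall>X1\<in>C. \<forall>Y\<in>C. X1 \<subseteq> Y \<or> Y \<subseteq> X1"
      using C(2) by (auto simp: subset_chain_def)
    obtain L0 where L0: "L0 \<in> C" using C(1) by auto
    have li: "left_ideal (\<Union>C) R"
    proof (rule left_idealI)
      show "\<Union>C \<subseteq> carrier R" using CA left_idealD(1) by blast
      show "\<zero> \<in> \<Union>C" using L0 CA left_idealD(2) by blast
    next
      fix x y assume "x \<in> \<Union>C" "y \<in> \<Union>C"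
      then obtain X1 Y where XY: "X1 \<in> C" "Y \<in> C" "x \<in> X1" "y \<in> Y" by auto
      show "x \<oplus> y \<in> \<Union>C"
      proof (cases "X1 \<subseteq> Y")
        case True
        then have "x \<oplus> y \<in> Y" using XY CA left_idealD(3)[of Y x y] by blast
        then show ?thesis using XY by blast
      next
        case False
        then have "Y \<subseteq> X1" using ch XY by blast
        then have "x \<oplus> y \<in> X1" using XY CA left_idealD(3)[of X1 x y] by blast
        then show ?thesis using XY by blast
      qed
    next
      fix r x assume "r \<in> carrier R" "x \<in> \<Union>C"
      then show "r \<otimes> x \<in> \<Union>C" using CA left_idealD(5) by blast
    qed
    show "\<Union>C \<in> ?A" using li CA L0 by blast
  qed
  then obtain M where M: "M \<in> ?A" "\<forall>X1\<in>(?A). M \<subseteq> X1 \<longrightarrow> X1 = M" by blast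
  have "maximal_left_ideal M R"
    unfolding maximal_left_ideal_def
  proof (intro conjI allI impI)
    show "left_ideal M R" using M by auto
    show "M \<noteq> carrier R" using M by auto
    fix L' assume L': "left_ideal L' R \<and> M \<subseteq> L'"
    show "L' = M \<or> L' = carrier R"
    proof (cases "\<one> \<in> L'")
      case True
      then show ?thesis using left_ideal_one L' by blast
    next
      case False
      then have "L' \<in> ?A" using L' M by auto
      then show ?thesis using M L' by blast
    qed
  qed
  then show ?thesis using M by auto
qed

lemma max_one: "maximal_left_ideal M R \<Longrightarrow> \<one> \<notin> M"
  unfolding maximal_left_ideal_def using left_ideal_one by blast

lemma jac_carrier: "jacobson R \<subseteq> carrier R"
  unfolding jacobson_def by auto

lemma jac_mem: "x \<in> jacobson R \<Longrightarrow> maximal_left_ideal M R \<Longrightarrow> x \<in> M"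
  unfolding jacobson_def by auto

lemma jac_memI: "x \<in> carrier R \<Longrightarrow> (\<And>M. maximal_left_ideal M R \<Longrightarrow> x \<in> M) \<Longrightarrow> x \<in> jacobson R"
  unfolding jacobson_def by auto

lemma max_left_ideal: "maximal_left_ideal M R \<Longrightarrow> left_ideal M R"
  unfolding maximal_left_ideal_def by auto

lemma jac_left_ideal: "left_ideal (jacobson R) R"
proof (rule left_idealI)
  show "jacobson R \<subseteq> carrier R" by (rule jac_carrier)
  show "\<zero> \<in> jacobson R" by (rule jac_memI) (auto dest: max_left_ideal left_idealD(2))
next
  fix x y assume "x \<in> jacobson R" "y \<in> jacobson R"
  then show "x \<oplus> y \<in> jacobson R"
    using jac_carrier jac_mem max_left_ideal left_idealD(3) by (intro jac_memI) blast+
next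
  fix r x assume "r \<in> carrier R" "x \<in> jacobson R"
  then show "r \<otimes> x \<in> jacobson R"
    using jac_carrier jac_mem max_left_ideal left_idealD(5) by (intro jac_memI) blast+
qed

lemma jac_left_inv:
  assumes x: "x \<in> jacobson R" and r: "r \<in> carrier R"
  shows "\<exists>y\<in>carrier R. y \<otimes> (\<one> \<ominus> r \<otimes> x) = \<one>"
proof (rule ccontr)
  assume nex: "\<not> ?thesis"
  have xc: "x \<in> carrier R" using x jac_carrier by auto
  define a where "a = \<one> \<ominus> r \<otimes> x"
  have ac: "a \<in> carrier R" using xc r by (simp add: a_def)
  let ?L = "{s \<otimes> a | s. s \<in> carrier R}"
  have li: "left_ideal ?L R"
  proof (rule left_idealI)
    show "?L \<subseteq> carrier R" using ac by auto
    have "\<zero> = \<zero> \<otimes> a" using ac by simp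
    then show "\<zero> \<in> ?L" by blast
  next
    fix u v assume "u \<in> ?L" "v \<in> ?L"
    then obtain s t where st: "s \<in> carrier R" "t \<in> carrier R" "u = s \<otimes> a" "v = t \<otimes> a" by auto
    then have "u \<oplus> v = (s \<oplus> t) \<otimes> a" using ac by (simp add: l_distr)
    then show "u \<oplus> v \<in> ?L" using st by blast
  next
    fix r' u assume "r' \<in> carrier R" "u \<in> ?L"
    then obtain s where s: "s \<in> carrier R" "u = s \<otimes> a" by auto
    then have "r' \<otimes> u = (r' \<otimes> s) \<otimes> a" using ac \<open>r' \<in> carrier R\<close> by (simp add: m_assoc)
    then show "r' \<otimes> u \<in> ?L" using s \<open>r' \<in> carrier R\<close> by blast
  qed
  have "\<one> \<notin> ?L" using nex a_def by auto
  then obtain M where M: "maximal_left_ideal M R" "?L \<subseteq> M" using exists_max_left_ideal li by blast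
  have "a = \<one> \<otimes> a" using ac by simp
  then have aM: "a \<in> M" using M(2) by blast
  have "r \<otimes> x \<in> M" using jac_mem[OF x M(1)] r max_left_ideal[OF M(1)] left_idealD(5) by blast
  then have "a \<oplus> r \<otimes> x \<in> M" using aM max_left_ideal[OF M(1)] left_idealD(3) by blast
  moreover have "a \<oplus> r \<otimes> x = \<one>" unfolding a_def using xc r by (simp add: minus_plus_cancel)
  ultimately show False using max_one[OF M(1)] by simp
qed

lemma jac_unit:
  assumes x: "x \<in> jacobson R" shows "\<one> \<ominus> x \<in> Units R"
proof -
  have xc: "x \<in> carrier R" using x jac_carrier by auto
  obtain a where a: "a \<in> carrier R" "a \<otimes> (\<one> \<ominus> \<one> \<otimes> x) = \<one>" using jac_left_inv[OF x one_closed] by blast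
  then have a1: "a \<otimes> (\<one> \<ominus> x) = \<one>" using xc by simp
  have "a \<otimes> (\<one> \<ominus> x) = a \<ominus> a \<otimes> x" using a xc by (simp add: minus_eq r_distr r_minus)
  then have "a \<ominus> a \<otimes> x = \<one>" using a1 by simp
  then have "a = \<one> \<oplus> a \<otimes> x" using minus_plus_cancel[of a "a \<otimes> x"] a xc by simp
  also have "\<dots> = \<one> \<ominus> (\<ominus> a) \<otimes> x" using a xc by (simp add: minus_eq l_minus)
  finally have aeq: "a = \<one> \<ominus> (\<ominus> a) \<otimes> x" .
  obtain b where b: "b \<in> carrier R" "b \<otimes> (\<one> \<ominus> (\<ominus> a) \<otimes> x) = \<one>"
    using jac_left_inv[OF x a_inv_closed[OF a(1)]] by blast
  have ba: "b \<otimes> a = \<one>" using b aeq by simp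
  have "b = \<one> \<ominus> x" using lr_inv_eq[OF a(1) b(1) _ ba a1] xc by simp
  then have "(\<one> \<ominus> x) \<otimes> a = \<one>" using ba by simp
  then show ?thesis using a1 a xc unfolding Units_def by auto
qed

lemma jac_charI:
  assumes xc: "x \<in> carrier R" and h: "\<And>r. r \<in> carrier R \<Longrightarrow> \<exists>y\<in>carrier R. y \<otimes> (\<one> \<ominus> r \<otimes> x) = \<one>"
  shows "x \<in> jacobson R"
proof (rule jac_memI[OF xc])
  fix M assume M: "maximal_left_ideal M R"
  have Mli: "left_ideal M R" using max_left_ideal[OF M] .
  show "x \<in> M"
  proof (rule ccontr)
    assume xM: "x \<notin> M"
    let ?L = "{m \<oplus> r \<otimes> x | m r. m \<in> M \<and> r \<in> carrier R}"
    have Mc: "M \<subseteq> carrier R" using left_idealD(1)[OF Mli] .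
    have li: "left_ideal ?L R"
    proof (rule left_idealI)
      show "?L \<subseteq> carrier R" using Mc xc by auto
      have "\<zero> = \<zero> \<oplus> \<zero> \<otimes> x" using xc by simp
      then show "\<zero> \<in> ?L" using left_idealD(2)[OF Mli] by blast
    next
      fix u v assume "u \<in> ?L" "v \<in> ?L"
      then obtain m r m' r' where mr: "m \<in> M" "r \<in> carrier R" "m' \<in> M" "r' \<in> carrier R"
        "u = m \<oplus> r \<otimes> x" "v = m' \<oplus> r' \<otimes> x" by blast
      have mc: "m \<in> carrier R" "m' \<in> carrier R" using mr Mc by auto
      have "u \<oplus> v = (m \<oplus> m') \<oplus> (r \<oplus> r') \<otimes> x" using mr mc xc by (simp add: l_distr a_ac)
      moreover have "m \<oplus> m' \<in> M" using mr left_idealD(3)[OF Mli] by blast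
      ultimately show "u \<oplus> v \<in> ?L" using mr by blast
    next
      fix s u assume s: "s \<in> carrier R" and "u \<in> ?L"
      then obtain m r where mr: "m \<in> M" "r \<in> carrier R" "u = m \<oplus> r \<otimes> x" by blast
      have mc: "m \<in> carrier R" using mr Mc by auto
      have "s \<otimes> u = s \<otimes> m \<oplus> (s \<otimes> r) \<otimes> x" using mr mc xc s by (simp add: r_distr m_assoc)
      moreover have "s \<otimes> m \<in> M" using mr s left_idealD(5)[OF Mli] by blast
      ultimately show "s \<otimes> u \<in> ?L" using mr s by blast
    qed
    have "M \<subseteq> ?L"
    proof
      fix m assume m: "m \<in> M"
      have "m = m \<oplus> \<zero> \<otimes> x" using m Mc xc by auto
      then show "m \<in> ?L" using m by blast
    qed
    moreover have "x \<in> ?L"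
    proof -
      have "x = \<zero> \<oplus> \<one> \<otimes> x" using xc by simp
      then show ?thesis using left_idealD(2)[OF Mli] by blast
    qed
    ultimately have "?L = carrier R" using M li xM unfolding maximal_left_ideal_def by blast
    then have "\<one> \<in> ?L" by simp
    then obtain m r where mr: "m \<in> M" "r \<in> carrier R" "\<one> = m \<oplus> r \<otimes> x" by blast
    have mc: "m \<in> carrier R" using mr Mc by auto
    have "\<one> \<ominus> r \<otimes> x = m" using mr mc xc by (simp add: minus_eq a_assoc r_neg)
    moreover obtain y where y: "y \<in> carrier R" "y \<otimes> (\<one> \<ominus> r \<otimes> x) = \<one>" using h[OF mr(2)] by blast
    ultimately have "\<one> \<in> M" using left_idealD(5)[OF Mli y(1) mr(1)] by simp
    then show False using max_one[OF M] by simp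
  qed
qed

lemma one_minus_swap:
  assumes a: "a \<in> carrier R" and b: "b \<in> carrier R" and u: "u \<in> carrier R"
    and inv: "u \<otimes> (\<one> \<ominus> b \<otimes> a) = \<one>"
  shows "(\<one> \<oplus> a \<otimes> u \<otimes> b) \<otimes> (\<one> \<ominus> a \<otimes> b) = \<one>"
proof -
  have e1: "b \<otimes> (\<one> \<ominus> a \<otimes> b) = (\<one> \<ominus> b \<otimes> a) \<otimes> b"
    using a b by (simp add: minus_eq r_distr l_distr r_minus l_minus m_assoc)
  have "(a \<otimes> u \<otimes> b) \<otimes> (\<one> \<ominus> a \<otimes> b) = (a \<otimes> u) \<otimes> (b \<otimes> (\<one> \<ominus> a \<otimes> b))"
    using a b u by (simp add: m_assoc)
  also have "\<dots> = (a \<otimes> u) \<otimes> ((\<one> \<ominus> b \<otimes> a) \<otimes> b)" using e1 by simp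
  also have "\<dots> = a \<otimes> ((u \<otimes> (\<one> \<ominus> b \<otimes> a)) \<otimes> b)" using a b u by (simp add: m_assoc)
  also have "\<dots> = a \<otimes> b" using inv b by simp
  finally have e2: "(a \<otimes> u \<otimes> b) \<otimes> (\<one> \<ominus> a \<otimes> b) = a \<otimes> b" .
  have "(\<one> \<oplus> a \<otimes> u \<otimes> b) \<otimes> (\<one> \<ominus> a \<otimes> b) = (\<one> \<ominus> a \<otimes> b) \<oplus> (a \<otimes> u \<otimes> b) \<otimes> (\<one> \<ominus> a \<otimes> b)"
    using a b u by (simp add: l_distr)
  also have "\<dots> = (\<one> \<ominus> a \<otimes> b) \<oplus> a \<otimes> b" using e2 by simp
  also have "\<dots> = \<one>" using a b by (simp add: minus_plus_cancel)
  finally show ?thesis .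
qed

lemma jac_rmult:
  assumes x: "x \<in> jacobson R" and s: "s \<in> carrier R"
  shows "x \<otimes> s \<in> jacobson R"
proof (rule jac_charI)
  have xc: "x \<in> carrier R" using x jac_carrier by auto
  show "x \<otimes> s \<in> carrier R" using xc s by simp
  fix r assume r: "r \<in> carrier R"
  have "(s \<otimes> r) \<otimes> x \<in> jacobson R" using left_idealD(5)[OF jac_left_ideal _ x] s r by simp
  then have U: "\<one> \<ominus> (s \<otimes> r) \<otimes> x \<in> Units R" by (rule jac_unit)
  define u where "u = inv (\<one> \<ominus> (s \<otimes> r) \<otimes> x)"
  have uc: "u \<in> carrier R" using U u_def by simp
  have "u \<otimes> (\<one> \<ominus> s \<otimes> (r \<otimes> x)) = \<one>" using U u_def s r xc by (simp add: m_assoc)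
  then have "(\<one> \<oplus> (r \<otimes> x) \<otimes> u \<otimes> s) \<otimes> (\<one> \<ominus> (r \<otimes> x) \<otimes> s) = \<one>"
    using one_minus_swap[of "r \<otimes> x" s u] r xc s uc by simp
  moreover have "(r \<otimes> x) \<otimes> s = r \<otimes> (x \<otimes> s)" using r xc s by (simp add: m_assoc)
  ultimately show "\<exists>y\<in>carrier R. y \<otimes> (\<one> \<ominus> r \<otimes> (x \<otimes> s)) = \<one>"
    using r xc s uc by (intro bexI[of _ "\<one> \<oplus> (r \<otimes> x) \<otimes> u \<otimes> s"]) auto
qed

lemma jac_ideal: "ideal (jacobson R) R"
proof (rule idealI)
  show "ring R" by (rule ring_axioms)
  show "subgroup (jacobson R) (add_monoid R)"
    using jac_left_ideal unfolding left_ideal_def additive_subgroup_def by blast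
  show "x \<otimes> a \<in> jacobson R" if "a \<in> jacobson R" "x \<in> carrier R" for a x
    using left_idealD(5)[OF jac_left_ideal] that by blast
  show "a \<otimes> x \<in> jacobson R" if "a \<in> jacobson R" "x \<in> carrier R" for a x
    using jac_rmult that by blast
qed

end


context ring
begin

lemma idem_J_nil_zero:
  assumes e: "e \<in> idempotents R" and j: "j \<in> jacobson R" and q: "q \<in> nilpotents R"
    and eq: "e = j \<oplus> q"
  shows "e = \<zero>"
proof -
  have ec: "e \<in> carrier R" and ee: "e \<otimes> e = e" using e unfolding idempotents_def by auto
  have jc: "j \<in> carrier R" using j jac_carrier by auto
  obtain N :: nat where qc: "q \<in> carrier R" and qN: "q [^] N = \<zero>" using q unfolding nilpotents_def by blast
  have JL: "left_ideal (jacobson R) R" by (rule jac_left_ideal)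
  have key: "\<exists>k\<in>jacobson R. e [^] n = q [^] n \<oplus> k" for n :: nat
  proof (induction n)
    case 0
    show ?case using left_idealD(2)[OF JL] by (intro bexI[of _ \<zero>]) auto
  next
    case (Suc n)
    then obtain k where k: "k \<in> jacobson R" "e [^] n = q [^] n \<oplus> k" by blast
    have kc: "k \<in> carrier R" using k jac_carrier by auto
    have en: "e [^] n \<in> carrier R" "q [^] n \<in> carrier R" using ec qc by auto
    have "e [^] Suc n = e [^] n \<otimes> (j \<oplus> q)" using eq by simp
    also have "\<dots> = e [^] n \<otimes> j \<oplus> (q [^] n \<oplus> k) \<otimes> q" using en jc qc k by (simp add: r_distr)
    also have "\<dots> = e [^] n \<otimes> j \<oplus> (q [^] Suc n \<oplus> k \<otimes> q)" using en jc qc kc by (simp add: l_distr)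
    also have "\<dots> = q [^] Suc n \<oplus> (e [^] n \<otimes> j \<oplus> k \<otimes> q)" using en jc qc kc by (simp add: a_lcomm)
    finally have 1: "e [^] Suc n = q [^] Suc n \<oplus> (e [^] n \<otimes> j \<oplus> k \<otimes> q)" .
    have "e [^] n \<otimes> j \<in> jacobson R" using left_idealD(5)[OF JL en(1) j] .
    moreover have "k \<otimes> q \<in> jacobson R" using jac_rmult[OF k(1) qc] .
    ultimately have "e [^] n \<otimes> j \<oplus> k \<otimes> q \<in> jacobson R" using left_idealD(3)[OF JL] by blast
    then show ?case using 1 by blast
  qed
  have pw: "e [^] Suc n = e" for n :: nat
    by (induction n) (use ec ee in auto)
  obtain k where k: "k \<in> jacobson R" "e [^] Suc N = q [^] Suc N \<oplus> k" using key by blast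
  have "q [^] Suc N = \<zero>" using pow_zero_mono[OF qc qN, of "Suc N"] by simp
  then have "e = k" using k pw[of N] jac_carrier by auto
  then have eJ: "e \<in> jacobson R" using k by simp
  have U: "\<one> \<ominus> e \<in> Units R" using jac_unit[OF eJ] .
  have "(\<one> \<ominus> e) \<otimes> e = e \<ominus> e \<otimes> e" using ec by (simp add: minus_eq l_distr l_minus)
  also have "\<dots> = \<zero>" using ee ec by simp
  finally have z: "(\<one> \<ominus> e) \<otimes> e = \<zero>" .
  have "e = inv (\<one> \<ominus> e) \<otimes> ((\<one> \<ominus> e) \<otimes> e)" using U ec by (simp add: m_assoc[symmetric])
  also have "\<dots> = \<zero>" using z U by simp
  finally show ?thesis .
qed

lemma GWNC_jac_nil:
  assumes G: "GWNC R" shows "jacobson R \<subseteq> nilpotents R"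
proof
  fix j assume j: "j \<in> jacobson R"
  have jc: "j \<in> carrier R" using j jac_carrier by auto
  have JL: "left_ideal (jacobson R) R" by (rule jac_left_ideal)
  show "j \<in> nilpotents R"
  proof (cases "j \<in> Units R")
    case True
    have ij: "inv j \<in> carrier R" using True by simp
    have "inv j \<otimes> j \<in> jacobson R" by (rule left_idealD(5)[OF JL ij j])
    then have "\<one> \<in> jacobson R" using True by simp
    then have "\<one> \<ominus> \<one> \<in> Units R" by (rule jac_unit)
    moreover have "\<one> \<ominus> \<one> = \<zero>" by (simp add: a_minus_def r_neg)
    ultimately have "\<zero> \<in> Units R" by simp
    then obtain y where "y \<in> carrier R" "y \<otimes> \<zero> = \<one>" unfolding Units_def by blast
    then have "\<one> = \<zero>" by simp
    then have "j [^] (0::nat) = \<zero>" by simp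
    then show ?thesis using jc unfolding nilpotents_def by blast
  next
    case False
    then obtain q e where q: "q \<in> nilpotents R" and e: "e \<in> idempotents R"
      and dec: "j = q \<oplus> e \<or> j = q \<ominus> e"
      using G jc unfolding GWNC_def by blast
    have qc: "q \<in> carrier R" using q unfolding nilpotents_def by auto
    have ec: "e \<in> carrier R" using e unfolding idempotents_def by auto
    from dec show ?thesis
    proof
      assume h: "j = q \<oplus> e"
      have "j = e \<oplus> q" using h a_comm[OF qc ec] by simp
      then have "e = j \<oplus> \<ominus> q" using qc ec by (simp add: a_assoc r_neg)
      then have "e = \<zero>" using idem_J_nil_zero[OF e j neg_nilpotent[OF q]] by simp
      then have "j = q" using h qc by simp
      then show ?thesis using q by simp
    next
      assume h: "j = q \<ominus> e"
      have mj: "\<ominus> j \<in> jacobson R" using left_idealD(4)[OF JL j] .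
      have "\<ominus> j = \<ominus> q \<oplus> e" using h qc ec by (simp add: minus_eq minus_add)
      also have "\<dots> = e \<oplus> \<ominus> q" using a_comm[OF a_inv_closed[OF qc] ec] .
      finally have "\<ominus> j \<oplus> q = e \<oplus> \<ominus> q \<oplus> q" by simp
      then have "e = \<ominus> j \<oplus> q" using qc ec by (simp add: a_assoc l_neg)
      then have "e = \<zero>" using idem_J_nil_zero[OF e mj q] by simp
      then have "j = q" using h qc by (simp add: a_minus_def)
      then show ?thesis using q by simp
    qed
  qed
qed

end


context cring
begin

lemma I1a: "f \<in> carrier R \<Longrightarrow> y \<in> carrier R \<Longrightarrow> w \<in> carrier R \<Longrightarrow>
  (f \<oplus> y \<otimes> w) \<ominus> (f \<oplus> y \<otimes> w) \<otimes> (f \<oplus> y \<otimes> w) = (f \<ominus> f \<otimes> f) \<oplus> y \<otimes> (w \<ominus> (f \<oplus> f) \<otimes> w) \<ominus> y \<otimes> y \<otimes> (w \<otimes> w)"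
  by algebra
lemma I1b: "f \<in> carrier R \<Longrightarrow> (f \<oplus> f \<ominus> \<one>) \<ominus> (f \<oplus> f) \<otimes> (f \<oplus> f \<ominus> \<one>) = \<ominus> ((f \<oplus> f \<ominus> \<one>) \<otimes> (f \<oplus> f \<ominus> \<one>))"
  by algebra
lemma I1c: "f \<in> carrier R \<Longrightarrow> (f \<oplus> f \<ominus> \<one>) \<otimes> (f \<oplus> f \<ominus> \<one>) = \<one> \<ominus> ((f \<ominus> f \<otimes> f) \<oplus> (f \<ominus> f \<otimes> f) \<oplus> (f \<ominus> f \<otimes> f) \<oplus> (f \<ominus> f \<otimes> f))"
  by algebra
lemma I1d: "y \<in> carrier R \<Longrightarrow> y \<oplus> y \<otimes> (\<ominus> (\<one> \<ominus> (y \<oplus> y \<oplus> y \<oplus> y))) \<ominus> y \<otimes> y \<otimes> (\<one> \<ominus> (y \<oplus> y \<oplus> y \<oplus> y)) = y \<otimes> y \<otimes> (\<one> \<oplus> \<one> \<oplus> \<one> \<oplus> (y \<oplus> y \<oplus> y \<oplus> y))"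
  by algebra
lemma I2: "f \<in> carrier R \<Longrightarrow> e \<in> carrier R \<Longrightarrow> z \<in> carrier R \<Longrightarrow> (f \<oplus> z) \<ominus> e = (f \<ominus> e) \<oplus> z"
  by algebra
lemma I3: "x \<in> carrier R \<Longrightarrow> c \<in> carrier R \<Longrightarrow> p \<in> carrier R \<Longrightarrow> d \<in> carrier R \<Longrightarrow> w \<in> carrier R \<Longrightarrow>
  x \<otimes> c \<oplus> (x \<otimes> p) \<otimes> d \<otimes> w = x \<otimes> (c \<oplus> p \<otimes> d \<otimes> w)"
  by algebra
lemma I4: "p \<in> carrier R \<Longrightarrow> d \<in> carrier R \<Longrightarrow> t \<in> carrier R \<Longrightarrow>
  (p \<otimes> d) \<otimes> (p \<otimes> d) \<otimes> t = (p \<otimes> p) \<otimes> (d \<otimes> d \<otimes> t)"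
  by algebra

lemma lift_idem_cring:
  assumes ec: "e \<in> carrier R" and xm: "(e \<ominus> e \<otimes> e) [^] (m::nat) = \<zero>"
  shows "\<exists>f\<in>carrier R. f \<otimes> f = f \<and> (\<exists>c\<in>carrier R. f \<ominus> e = (e \<ominus> e \<otimes> e) \<otimes> c)"
proof -
  define x where "x = e \<ominus> e \<otimes> e"
  have xc: "x \<in> carrier R" using ec by (simp add: x_def)
  have step: "\<exists>f\<in>carrier R. (\<exists>c\<in>carrier R. f \<ominus> e = x \<otimes> c) \<and>
      (\<exists>d\<in>carrier R. f \<ominus> f \<otimes> f = x [^] ((2::nat)^k) \<otimes> d)" for k :: nat
  proof (induction k)
    case 0
    have "e \<ominus> e = x \<otimes> \<zero>" using ec xc by simp
    moreover have "e \<ominus> e \<otimes> e = x [^] ((2::nat)^0) \<otimes> \<one>" using xc by (simp add: x_def)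
    ultimately show ?case using ec by blast
  next
    case (Suc k)
    then obtain f c d where f: "f \<in> carrier R" "c \<in> carrier R" "d \<in> carrier R"
      "f \<ominus> e = x \<otimes> c" "f \<ominus> f \<otimes> f = x [^] ((2::nat)^k) \<otimes> d" by blast
    define y where "y = f \<ominus> f \<otimes> f"
    define w where "w = f \<oplus> f \<ominus> \<one>"
    define p where "p = x [^] ((2::nat)^k)"
    have yc: "y \<in> carrier R" and wc: "w \<in> carrier R" and pc: "p \<in> carrier R"
      using f xc by (auto simp: y_def w_def p_def)
    have yp: "y = p \<otimes> d" using f by (simp add: y_def p_def)
    define p' where "p' = x [^] ((2::nat)^k - 1)"
    have p'c: "p' \<in> carrier R" using xc by (simp add: p'_def)
    have "Suc ((2::nat)^k - 1) = 2^k" by simp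
    then have pp': "p = x \<otimes> p'" using xc unfolding p_def p'_def by (metis nat_pow_Suc2)
    define f' where "f' = f \<oplus> y \<otimes> w"
    have f'c: "f' \<in> carrier R" using f yc wc by (simp add: f'_def)
    have "f' \<ominus> e = (f \<ominus> e) \<oplus> y \<otimes> w" unfolding f'_def using I2 f ec yc wc by simp
    also have "\<dots> = x \<otimes> c \<oplus> (x \<otimes> p') \<otimes> d \<otimes> w" using f yp pp' by simp
    also have "\<dots> = x \<otimes> (c \<oplus> p' \<otimes> d \<otimes> w)" using I3 xc f p'c wc by simp
    finally have c': "f' \<ominus> e = x \<otimes> (c \<oplus> p' \<otimes> d \<otimes> w)" .
    have wb: "w \<ominus> (f \<oplus> f) \<otimes> w = \<ominus> (w \<otimes> w)" unfolding w_def using I1b f by simp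
    have wc2: "w \<otimes> w = \<one> \<ominus> (y \<oplus> y \<oplus> y \<oplus> y)" unfolding w_def y_def using I1c f by simp
    have "f' \<ominus> f' \<otimes> f' = (f \<ominus> f \<otimes> f) \<oplus> y \<otimes> (w \<ominus> (f \<oplus> f) \<otimes> w) \<ominus> y \<otimes> y \<otimes> (w \<otimes> w)"
      unfolding f'_def using I1a f yc wc by simp
    also have "\<dots> = y \<oplus> y \<otimes> (\<ominus> (\<one> \<ominus> (y \<oplus> y \<oplus> y \<oplus> y))) \<ominus> y \<otimes> y \<otimes> (\<one> \<ominus> (y \<oplus> y \<oplus> y \<oplus> y))"
      using wb wc2 y_def by simp
    also have "\<dots> = y \<otimes> y \<otimes> (\<one> \<oplus> \<one> \<oplus> \<one> \<oplus> (y \<oplus> y \<oplus> y \<oplus> y))" using I1d yc by simp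
    also have "\<dots> = (p \<otimes> p) \<otimes> (d \<otimes> d \<otimes> (\<one> \<oplus> \<one> \<oplus> \<one> \<oplus> (y \<oplus> y \<oplus> y \<oplus> y)))"
      using yp I4 pc f yc by simp
    also have "p \<otimes> p = x [^] ((2::nat)^Suc k)" unfolding p_def using xc by (simp add: nat_pow_mult mult_2)
    finally have d': "f' \<ominus> f' \<otimes> f' = x [^] ((2::nat)^Suc k) \<otimes> (d \<otimes> d \<otimes> (\<one> \<oplus> \<one> \<oplus> \<one> \<oplus> (y \<oplus> y \<oplus> y \<oplus> y)))" .
    show ?case using f'c c' d' f p'c wc yc by blast
  qed
  obtain f c d where f: "f \<in> carrier R" "c \<in> carrier R" "d \<in> carrier R"
      "f \<ominus> e = x \<otimes> c" "f \<ominus> f \<otimes> f = x [^] ((2::nat)^m) \<otimes> d" using step[of m] by blast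
  have "m \<le> 2 ^ m" using less_exp[of m] by simp
  then have "x [^] ((2::nat)^m) = \<zero>" using pow_zero_mono[OF xc, of m] xm x_def by simp
  then have "f \<ominus> f \<otimes> f = \<zero>" using f by simp
  then have "f \<otimes> f = f" using f by simp
  then show ?thesis using f x_def by blast
qed

end

definition bicomm :: "('a, 'b) ring_scheme \<Rightarrow> 'a \<Rightarrow> 'a set" where
  "bicomm R a = {y \<in> carrier R. \<forall>z \<in> carrier R. z \<otimes>\<^bsub>R\<^esub> a = a \<otimes>\<^bsub>R\<^esub> z \<longrightarrow> y \<otimes>\<^bsub>R\<^esub> z = z \<otimes>\<^bsub>R\<^esub> y}"

context ring
begin

lemma bicomm_sub: "bicomm R a \<subseteq> carrier R"
  unfolding bicomm_def by auto

lemma bicomm_mem: "a \<in> carrier R \<Longrightarrow> a \<in> bicomm R a"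
  unfolding bicomm_def by auto

lemma bicomm_subcring:
  assumes a: "a \<in> carrier R"
  shows "subcring (bicomm R a) R"
proof (rule subcringI)
  show "subring (bicomm R a) R"
  proof (rule subringI)
    show "bicomm R a \<subseteq> carrier R" by (rule bicomm_sub)
    show "\<one> \<in> bicomm R a" unfolding bicomm_def by auto
  next
    fix h assume h: "h \<in> bicomm R a"
    then have hc: "h \<in> carrier R" using bicomm_sub by auto
    show "\<ominus> h \<in> bicomm R a" unfolding bicomm_def
    proof (intro CollectI conjI ballI impI)
      show "\<ominus> h \<in> carrier R" using hc by simp
      fix z assume z: "z \<in> carrier R" "z \<otimes> a = a \<otimes> z"
      have "h \<otimes> z = z \<otimes> h" using h z unfolding bicomm_def by auto
      then show "\<ominus> h \<otimes> z = z \<otimes> \<ominus> h" using hc z by (simp add: l_minus r_minus)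
    qed
  next
    fix h1 h2 assume h: "h1 \<in> bicomm R a" "h2 \<in> bicomm R a"
    then have hc: "h1 \<in> carrier R" "h2 \<in> carrier R" using bicomm_sub by auto
    show "h1 \<otimes> h2 \<in> bicomm R a" unfolding bicomm_def
    proof (intro CollectI conjI ballI impI)
      show "h1 \<otimes> h2 \<in> carrier R" using hc by simp
      fix z assume z: "z \<in> carrier R" "z \<otimes> a = a \<otimes> z"
      have 1: "h1 \<otimes> z = z \<otimes> h1" "h2 \<otimes> z = z \<otimes> h2" using h z unfolding bicomm_def by auto
      have "h1 \<otimes> h2 \<otimes> z = h1 \<otimes> (h2 \<otimes> z)" using hc z by (simp add: m_assoc)
      also have "\<dots> = h1 \<otimes> (z \<otimes> h2)" by (simp only: 1)
      also have "\<dots> = (h1 \<otimes> z) \<otimes> h2" using hc z by (simp add: m_assoc)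
      also have "\<dots> = (z \<otimes> h1) \<otimes> h2" by (simp only: 1)
      also have "\<dots> = z \<otimes> (h1 \<otimes> h2)" using hc z by (simp add: m_assoc)
      finally show "h1 \<otimes> h2 \<otimes> z = z \<otimes> (h1 \<otimes> h2)" .
    qed
    show "h1 \<oplus> h2 \<in> bicomm R a" unfolding bicomm_def
    proof (intro CollectI conjI ballI impI)
      show "h1 \<oplus> h2 \<in> carrier R" using hc by simp
      fix z assume z: "z \<in> carrier R" "z \<otimes> a = a \<otimes> z"
      have 1: "h1 \<otimes> z = z \<otimes> h1" "h2 \<otimes> z = z \<otimes> h2" using h z unfolding bicomm_def by auto
      then show "(h1 \<oplus> h2) \<otimes> z = z \<otimes> (h1 \<oplus> h2)" using hc z by (simp add: l_distr r_distr)
    qed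
  qed
next
  fix h1 h2 assume h: "h1 \<in> bicomm R a" "h2 \<in> bicomm R a"
  then have hc: "h1 \<in> carrier R" "h2 \<in> carrier R" using bicomm_sub by auto
  have "h2 \<otimes> a = a \<otimes> h2" using h(2) a unfolding bicomm_def by auto
  then show "h1 \<otimes> h2 = h2 \<otimes> h1" using h(1) hc unfolding bicomm_def by auto
qed

lemma bicomm_cring: "a \<in> carrier R \<Longrightarrow> cring (R\<lparr>carrier := bicomm R a\<rparr>)"
  using subcring_iff[OF bicomm_sub] bicomm_subcring by blast

lemma lift_idem:
  assumes I: "ideal I R" and nil: "I \<subseteq> nilpotents R" and ec: "e \<in> carrier R"
    and xI: "e \<ominus> e \<otimes> e \<in> I"
  shows "\<exists>f\<in>idempotents R. f \<ominus> e \<in> I"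
proof -
  define C where "C = bicomm R e"
  define S where "S = R\<lparr>carrier := C\<rparr>"
  have CS: "C \<subseteq> carrier R" unfolding C_def by (rule bicomm_sub)
  have cS: "cring S" unfolding S_def C_def by (rule bicomm_cring[OF ec])
  interpret S: cring S by (rule cS)
  have eC: "e \<in> C" unfolding C_def by (rule bicomm_mem[OF ec])
  have carrS: "carrier S = C" by (simp add: S_def)
  have mulS: "\<And>u v. u \<otimes>\<^bsub>S\<^esub> v = u \<otimes> v" by (simp add: S_def)
  have addS: "\<And>u v. u \<oplus>\<^bsub>S\<^esub> v = u \<oplus> v" by (simp add: S_def)
  have zS: "\<zero>\<^bsub>S\<^esub> = \<zero>" by (simp add: S_def)
  have oS: "\<one>\<^bsub>S\<^esub> = \<one>" by (simp add: S_def)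
  have invS: "\<ominus>\<^bsub>S\<^esub> u = \<ominus> u" if "u \<in> C" for u
  proof -
    have uc: "u \<in> carrier R" using that CS by auto
    have "\<ominus> u \<in> C" using subcringE(5)[OF bicomm_subcring[OF ec]] that unfolding C_def by blast
    moreover have "\<ominus> u \<oplus>\<^bsub>S\<^esub> u = \<zero>\<^bsub>S\<^esub>" using uc by (simp add: addS zS l_neg)
    ultimately show ?thesis using S.minus_equality[of "\<ominus> u" u] that carrS by simp
  qed
  have minS: "u \<ominus>\<^bsub>S\<^esub> v = u \<ominus> v" if "u \<in> C" "v \<in> C" for u v
    using invS[OF that(2)] by (simp add: a_minus_def addS)
  have powS: "u [^]\<^bsub>S\<^esub> (n::nat) = u [^] n" for u n
    by (induction n) (simp_all add: S_def)
  have eeC: "e \<otimes> e \<in> C" using S.m_closed[of e e] eC carrS mulS by simp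
  have xC: "e \<ominus> e \<otimes> e \<in> C" using S.minus_closed[of e "e \<otimes> e"] eC eeC carrS minS[OF eC eeC] mulS by simp
  obtain m :: nat where xm: "(e \<ominus> e \<otimes> e) [^] m = \<zero>" using xI nil unfolding nilpotents_def by blast
  have "(e \<ominus>\<^bsub>S\<^esub> e \<otimes>\<^bsub>S\<^esub> e) [^]\<^bsub>S\<^esub> m = \<zero>\<^bsub>S\<^esub>"
    using xm by (simp add: mulS minS[OF eC eeC] powS zS)
  then obtain f c where fc: "f \<in> C" "c \<in> C" "f \<otimes>\<^bsub>S\<^esub> f = f"
    "f \<ominus>\<^bsub>S\<^esub> e = (e \<ominus>\<^bsub>S\<^esub> e \<otimes>\<^bsub>S\<^esub> e) \<otimes>\<^bsub>S\<^esub> c"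
    using S.lift_idem_cring[of e m] eC carrS by blast
  have ff: "f \<otimes> f = f" using fc by (simp add: mulS)
  have "f \<ominus> e = (e \<ominus> e \<otimes> e) \<otimes> c" using fc by (simp add: mulS minS eC eeC)
  moreover have "(e \<ominus> e \<otimes> e) \<otimes> c \<in> I" using ideal.I_r_closed[OF I xI] fc CS by auto
  ultimately have "f \<ominus> e \<in> I" by simp
  moreover have "f \<in> idempotents R" using ff fc CS unfolding idempotents_def by auto
  ultimately show ?thesis by blast
qed

end


context ring
begin

lemma plus_minus_cancel:
  assumes "x \<in> carrier R" "y \<in> carrier R"
  shows "(x \<oplus> y) \<ominus> y = x"
  using assms by (simp add: minus_eq a_assoc r_neg)

lemma quot_surj:
  assumes "A \<in> carrier (R Quot I)"
  shows "\<exists>a\<in>carrier R. A = I +> a"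
  using assms unfolding FactRing_def by (simp add: A_RCOSETS_def')

lemma quot_eq:
  assumes "ideal I R" "a \<in> carrier R" "b \<in> carrier R"
  shows "I +> a = I +> b \<longleftrightarrow> a \<ominus> b \<in> I"
  using quotient_eq_iff_same_a_r_cos[OF assms] by simp

lemma quot_zero_iff:
  assumes I: "ideal I R" and a: "a \<in> carrier R"
  shows "I +> a = \<zero>\<^bsub>R Quot I\<^esub> \<longleftrightarrow> a \<in> I"
proof -
  interpret h: ring_hom_ring R "R Quot I" "(+>) I" by (rule ideal.rcos_ring_hom_ring[OF I])
  have "\<zero>\<^bsub>R Quot I\<^esub> = I +> \<zero>" by simp
  then show ?thesis using quot_eq[OF I a zero_closed] a by (simp add: a_minus_def)
qed

lemma nil_of_pow_in_nil:
  assumes nil: "I \<subseteq> nilpotents R" and q: "q \<in> carrier R" and qn: "q [^] (n::nat) \<in> I"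
  shows "q \<in> nilpotents R"
proof -
  obtain k :: nat where "(q [^] n) [^] k = \<zero>" using nil qn unfolding nilpotents_def by blast
  then have "q [^] (n * k) = \<zero>" using q by (simp add: nat_pow_pow)
  then show ?thesis using q unfolding nilpotents_def by blast
qed

lemma units_lift:
  assumes I: "ideal I R" and nil: "I \<subseteq> nilpotents R" and a: "a \<in> carrier R"
    and u: "I +> a \<in> Units (R Quot I)"
  shows "a \<in> Units R"
proof -
  interpret Q: ring "R Quot I" by (rule ideal.quotient_is_ring[OF I])
  interpret h: ring_hom_ring R "R Quot I" "(+>) I" by (rule ideal.rcos_ring_hom_ring[OF I])
  obtain B where B: "B \<in> carrier (R Quot I)" "B \<otimes>\<^bsub>R Quot I\<^esub> (I +> a) = \<one>\<^bsub>R Quot I\<^esub>"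
    "(I +> a) \<otimes>\<^bsub>R Quot I\<^esub> B = \<one>\<^bsub>R Quot I\<^esub>" using u unfolding Units_def by blast
  obtain b where b: "b \<in> carrier R" "B = I +> b" using quot_surj B(1) by blast
  have "I +> (b \<otimes> a) = I +> \<one>" using B b a h.hom_mult h.hom_one by simp
  then have "\<one> \<ominus> b \<otimes> a \<in> I" using quot_eq[OF I] a b by (metis m_closed one_closed)
  then have "\<one> \<ominus> (\<one> \<ominus> b \<otimes> a) \<in> Units R" using one_minus_nil_unit nil by blast
  then have ba: "b \<otimes> a \<in> Units R" using one_minus_one_minus a b by simp
  have "I +> (a \<otimes> b) = I +> \<one>" using B b a h.hom_mult h.hom_one by simp
  then have "\<one> \<ominus> a \<otimes> b \<in> I" using quot_eq[OF I] a b by (metis m_closed one_closed)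
  then have "\<one> \<ominus> (\<one> \<ominus> a \<otimes> b) \<in> Units R" using one_minus_nil_unit nil by blast
  then have ab: "a \<otimes> b \<in> Units R" using one_minus_one_minus a b by simp
  have l: "(inv (b \<otimes> a) \<otimes> b) \<otimes> a = \<one>" using ba a b by (simp add: m_assoc)
  have r: "a \<otimes> (b \<otimes> inv (a \<otimes> b)) = \<one>" using ab a b by (simp add: m_assoc[symmetric])
  show ?thesis by (rule left_right_inv_unit[OF a _ _ l r]) (use ab ba b in auto)
qed

lemma GWNC_quot_of:
  assumes I: "ideal I R" and G: "GWNC R"
  shows "GWNC (R Quot I)"
  unfolding GWNC_def
proof (intro ballI)
  interpret Q: ring "R Quot I" by (rule ideal.quotient_is_ring[OF I])
  interpret h: ring_hom_ring R "R Quot I" "(+>) I" by (rule ideal.rcos_ring_hom_ring[OF I])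
  fix A assume A: "A \<in> carrier (R Quot I) - Units (R Quot I)"
  obtain a where a: "a \<in> carrier R" "A = I +> a" using quot_surj A by blast
  have "a \<notin> Units R"
  proof
    assume u: "a \<in> Units R"
    have ia: "inv a \<in> carrier R" using u by simp
    have "(I +> inv a) \<otimes>\<^bsub>R Quot I\<^esub> A = \<one>\<^bsub>R Quot I\<^esub>"
      using a u ia h.hom_mult[of "inv a" a] h.hom_one by simp
    moreover have "A \<otimes>\<^bsub>R Quot I\<^esub> (I +> inv a) = \<one>\<^bsub>R Quot I\<^esub>"
      using a u ia h.hom_mult[of a "inv a"] h.hom_one by simp
    ultimately have "A \<in> Units (R Quot I)" using h.hom_closed[OF ia] A unfolding Units_def by blast
    then show False using A by blast
  qed
  then obtain q e where q: "q \<in> nilpotents R" and e: "e \<in> idempotents R"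
    and dec: "a = q \<oplus> e \<or> a = q \<ominus> e" using G a unfolding GWNC_def by blast
  have qc: "q \<in> carrier R" using q unfolding nilpotents_def by auto
  obtain n :: nat where qn: "q [^] n = \<zero>" using q unfolding nilpotents_def by blast
  have ec: "e \<in> carrier R" and ee: "e \<otimes> e = e" using e unfolding idempotents_def by auto
  have "(I +> q) [^]\<^bsub>R Quot I\<^esub> n = \<zero>\<^bsub>R Quot I\<^esub>"
    using h.hom_nat_pow[OF qc, of n] qn by simp
  then have hq: "I +> q \<in> nilpotents (R Quot I)" using h.hom_closed[OF qc] unfolding nilpotents_def by blast
  have "(I +> e) \<otimes>\<^bsub>R Quot I\<^esub> (I +> e) = I +> e" using h.hom_mult[OF ec ec] ee by simp
  then have he: "I +> e \<in> idempotents (R Quot I)" using h.hom_closed[OF ec] unfolding idempotents_def by blast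
  have "A = (I +> q) \<oplus>\<^bsub>R Quot I\<^esub> (I +> e) \<or> A = (I +> q) \<ominus>\<^bsub>R Quot I\<^esub> (I +> e)"
    using dec
  proof
    assume "a = q \<oplus> e"
    then show ?thesis using a h.hom_add[OF qc ec] by simp
  next
    assume "a = q \<ominus> e"
    then have "a = q \<oplus> \<ominus> e" by (simp add: minus_eq)
    then have "A = (I +> q) \<oplus>\<^bsub>R Quot I\<^esub> \<ominus>\<^bsub>R Quot I\<^esub> (I +> e)"
      using a h.hom_add[OF qc a_inv_closed[OF ec]] h.hom_a_inv[OF ec] by simp
    then show ?thesis by (simp add: Q.minus_eq)
  qed
  then show "\<exists>q\<in>nilpotents (R Quot I). \<exists>e\<in>idempotents (R Quot I).
     A = q \<oplus>\<^bsub>R Quot I\<^esub> e \<or> A = q \<ominus>\<^bsub>R Quot I\<^esub> e" using hq he by blast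
qed

lemma GWNC_of_quot:
  assumes I: "ideal I R" and nil: "I \<subseteq> nilpotents R" and G: "GWNC (R Quot I)"
  shows "GWNC R"
  unfolding GWNC_def
proof (intro ballI)
  interpret Q: ring "R Quot I" by (rule ideal.quotient_is_ring[OF I])
  interpret h: ring_hom_ring R "R Quot I" "(+>) I" by (rule ideal.rcos_ring_hom_ring[OF I])
  fix a assume a: "a \<in> carrier R - Units R"
  have ac: "a \<in> carrier R" using a by simp
  have "I +> a \<notin> Units (R Quot I)" using units_lift[OF I nil ac] a by blast
  then obtain Qq E where Qq: "Qq \<in> nilpotents (R Quot I)" and E: "E \<in> idempotents (R Quot I)"
    and dec: "I +> a = Qq \<oplus>\<^bsub>R Quot I\<^esub> E \<or> I +> a = Qq \<ominus>\<^bsub>R Quot I\<^esub> E"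
    using G h.hom_closed[OF ac] unfolding GWNC_def by blast
  have Qqc: "Qq \<in> carrier (R Quot I)" using Qq unfolding nilpotents_def by auto
  obtain n :: nat where Qqn: "Qq [^]\<^bsub>R Quot I\<^esub> n = \<zero>\<^bsub>R Quot I\<^esub>" using Qq unfolding nilpotents_def by blast
  have Ec: "E \<in> carrier (R Quot I)" and EE: "E \<otimes>\<^bsub>R Quot I\<^esub> E = E" using E unfolding idempotents_def by auto
  obtain e where ec: "e \<in> carrier R" and Ee: "E = I +> e" using quot_surj Ec by blast
  have "I +> (e \<otimes> e) = I +> e" using h.hom_mult[OF ec ec] EE Ee by simp
  then have "e \<ominus> e \<otimes> e \<in> I" using quot_eq[OF I ec] ec by (metis m_closed)
  then obtain f where f: "f \<in> idempotents R" "f \<ominus> e \<in> I" using lift_idem[OF I nil ec] by blast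
  have fc: "f \<in> carrier R" using f unfolding idempotents_def by auto
  have hf: "I +> f = E" using quot_eq[OF I fc ec] f Ee by simp
  have nilq: "q' \<in> nilpotents R" if q'c: "q' \<in> carrier R" and hq': "I +> q' = Qq" for q'
  proof -
    have "I +> (q' [^] n) = \<zero>\<^bsub>R Quot I\<^esub>" using h.hom_nat_pow[OF q'c, of n] hq' Qqn by simp
    then have "q' [^] n \<in> I" using quot_zero_iff[OF I] q'c by simp
    then show ?thesis using nil_of_pow_in_nil[OF nil q'c] by blast
  qed
  from dec show "\<exists>q\<in>nilpotents R. \<exists>e\<in>idempotents R. a = q \<oplus> e \<or> a = q \<ominus> e"
  proof
    assume h1: "I +> a = Qq \<oplus>\<^bsub>R Quot I\<^esub> E"
    have q'c: "a \<ominus> f \<in> carrier R" using ac fc by simp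
    have "I +> (a \<ominus> f) = (I +> a) \<oplus>\<^bsub>R Quot I\<^esub> \<ominus>\<^bsub>R Quot I\<^esub> (I +> f)"
      using h.hom_add[OF ac a_inv_closed[OF fc]] h.hom_a_inv[OF fc] by (simp add: minus_eq)
    also have "\<dots> = (Qq \<oplus>\<^bsub>R Quot I\<^esub> E) \<ominus>\<^bsub>R Quot I\<^esub> E" using h1 hf by (simp add: Q.minus_eq)
    also have "\<dots> = Qq" using Q.plus_minus_cancel[OF Qqc Ec] .
    finally have "a \<ominus> f \<in> nilpotents R" using nilq[OF q'c] by blast
    moreover have "a = (a \<ominus> f) \<oplus> f" using minus_plus_cancel[OF ac fc] by simp
    ultimately show ?thesis using f(1) by blast
  next
    assume h1: "I +> a = Qq \<ominus>\<^bsub>R Quot I\<^esub> E"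
    have q'c: "a \<oplus> f \<in> carrier R" using ac fc by simp
    have "I +> (a \<oplus> f) = (I +> a) \<oplus>\<^bsub>R Quot I\<^esub> (I +> f)"
      using h.hom_add[OF ac fc] by simp
    also have "\<dots> = (Qq \<ominus>\<^bsub>R Quot I\<^esub> E) \<oplus>\<^bsub>R Quot I\<^esub> E" using h1 hf by simp
    also have "\<dots> = Qq" using Q.minus_plus_cancel[OF Qqc Ec] .
    finally have "a \<oplus> f \<in> nilpotents R" using nilq[OF q'c] by blast
    moreover have "a = (a \<oplus> f) \<ominus> f" using plus_minus_cancel[OF ac fc] by simp
    ultimately show ?thesis using f(1) by blast
  qed
qed

end

theorem proposition2p8:
  fixes R :: "('a, 'b) ring_scheme" and I :: "'a set"
  assumes "ring R" and "nil_ideal I R"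
  shows "(GWNC R \<longleftrightarrow> GWNC (R Quot I)) \<and>
         (GWNC R \<longleftrightarrow> jacobson R \<subseteq> nilpotents R \<and> GWNC (R Quot jacobson R))"
proof -
  interpret ring R by fact
  have I: "ideal I R" and nilI: "I \<subseteq> nilpotents R" using assms(2) unfolding nil_ideal_def by auto
  have i: "GWNC R \<longleftrightarrow> GWNC (R Quot I)" using GWNC_quot_of[OF I] GWNC_of_quot[OF I nilI] by blast
  have ii: "GWNC R \<longleftrightarrow> jacobson R \<subseteq> nilpotents R \<and> GWNC (R Quot jacobson R)"
    using GWNC_jac_nil GWNC_quot_of[OF jac_ideal] GWNC_of_quot[OF jac_ideal] by blast
  show ?thesis using i ii by blast
qed


end
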